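(* Let $G=(V,E)$ be a graph and $g:V\to[0,r]$ a function such that $VS_g(x,y)\le v$ for all $x,y\in V$. Let $M$ be a maximal matching in the violation graph $B_{2v/3,g}$ (each edge $(x,y)\in M$ oriented so that $g(x)<g(y)$). Obtain $h$ from $g$ by setting, for every $(x,y)\in M$, $h(x)=g(x)+v/3$ and $h(y)=g(y)-v/3$, and $h(z)=g(z)$ for unmatched $z$. Then $VS_h(x,y)\le 2v/3$ for all $x,y\in V$.
   Context: $\mathrm{dist}_G$ is the shortest-path distance. For $f:V\to\mathbb{R}$, the violation score is $VS_f(x,y)=|f(x)-f(y)|-\mathrm{dist}_G(x,y)$ if this quantity is positive and $0$ otherwise. For $\tau\ge0$, the violation graph $B_{\tau,f}$ is the directed graph on $V$ with edge set $\{(x,y): VS_f(x,y)>\tau \text{ and } f(x)<f(y)\}$; a matching in it means a matching in its underlying undirected graph. *)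

theory Defs
  imports Main "HOL-Library.Extended_Nat"
begin

text \<open>Undirected graph: vertex set V, symmetric edge set E \<subseteq> V \<times> V.
  walk E n x y: there is a walk with n edges from x to y.\<close>

inductive walk :: "('a \<times> 'a) set \<Rightarrow> nat \<Rightarrow> 'a \<Rightarrow> 'a \<Rightarrow> bool" for E where
  walk0: "walk E 0 x x"
| walkS: "(x, y) \<in> E \<Longrightarrow> walk E n y z \<Longrightarrow> walk E (Suc n) x z"

text \<open>Shortest-path distance; infinity if no path exists.\<close>
definition dist_G :: "('a \<times> 'a) set \<Rightarrow> 'a \<Rightarrow> 'a \<Rightarrow> enat" where
  "dist_G E x y = (INF n \<in> {n. walk E n x y}. enat n)"

definition VS :: "('a \<times> 'a) set \<Rightarrow> ('a \<Rightarrow> real) \<Rightarrow> 'a \<Rightarrow> 'a \<Rightarrow> real" where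
  "VS E f x y = (case dist_G E x y of
       enat d \<Rightarrow> max 0 (\<bar>f x - f y\<bar> - real d)
     | \<infinity> \<Rightarrow> 0)"

definition viol_graph :: "'a set \<Rightarrow> ('a \<times> 'a) set \<Rightarrow> real \<Rightarrow> ('a \<Rightarrow> real) \<Rightarrow> ('a \<times> 'a) set" where
  "viol_graph V E tau f = {(x, y). x \<in> V \<and> y \<in> V \<and> VS E f x y > tau \<and> f x < f y}"

definition is_matching :: "('a \<times> 'a) set \<Rightarrow> ('a \<times> 'a) set \<Rightarrow> bool" where
  "is_matching B M \<longleftrightarrow> M \<subseteq> B \<and>
     (\<forall>e1\<in>M. \<forall>e2\<in>M. e1 \<noteq> e2 \<longrightarrow> {fst e1, snd e1} \<inter> {fst e2, snd e2} = {})"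

definition maximal_matching :: "('a \<times> 'a) set \<Rightarrow> ('a \<times> 'a) set \<Rightarrow> bool" where
  "maximal_matching B M \<longleftrightarrow> is_matching B M \<and> \<not> (\<exists>M'. M \<subset> M' \<and> is_matching B M')"

end

theory Submission
  imports Defs
begin

lemma walk_app: "walk E n x y \<Longrightarrow> walk E m y z \<Longrightarrow> walk E (n+m) x z"
  by (induction rule: walk.induct) (auto intro: walk.walkS)

lemma walk_rev: assumes "sym E" shows "walk E n x y \<Longrightarrow> walk E n y x"
proof (induction rule: walk.induct)
  case (walk0 x) then show ?case by (rule walk.walk0)
next
  case (walkS x y n z)
  have "(y, x) \<in> E" using walkS assms by (meson symD)
  then have "walk E 1 y x" by (auto intro: walk.intros)
  from walk_app[OF walkS.IH this] show ?case by simp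
qed

lemma dist_le: "walk E n x y \<Longrightarrow> dist_G E x y \<le> enat n"
  unfolding dist_G_def by (rule INF_lower) simp

lemma dist_enat: assumes "dist_G E x y = enat d" shows "walk E d x y"
proof -
  let ?S = "{n. walk E n x y}"
  have ne: "?S \<noteq> {}"
  proof
    assume "?S = {}"
    then have "dist_G E x y = \<infinity>" unfolding dist_G_def by (simp add: top_enat_def)
    with assms show False by simp
  qed
  then obtain k where k: "walk E k x y" by auto
  define l where "l = (LEAST n. walk E n x y)"
  have wl: "walk E l x y" unfolding l_def by (rule LeastI[of "\<lambda>n. walk E n x y", OF k])
  have "dist_G E x y = enat l"
  proof (rule antisym)
    show "dist_G E x y \<le> enat l" using dist_le[OF wl] .
    show "enat l \<le> dist_G E x y" unfolding dist_G_def
      by (rule INF_greatest) (simp add: l_def Least_le)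
  qed
  with assms wl show ?thesis by simp
qed

lemma VS_nonneg: "VS E f x y \<ge> 0"
  by (auto simp: VS_def split: enat.split)

lemma VS_walk_le:
  assumes "VS E f x y \<le> t" "walk E n x y"
  shows "\<bar>f x - f y\<bar> \<le> t + n"
proof -
  have "dist_G E x y \<le> enat n" using dist_le[OF assms(2)] .
  then obtain d where d: "dist_G E x y = enat d" "d \<le> n"
    by (cases "dist_G E x y") auto
  then have "max 0 (\<bar>f x - f y\<bar> - real d) \<le> t" using assms(1) by (simp add: VS_def)
  then show ?thesis using d(2) by linarith
qed

lemma VS_walk_gt:
  assumes "\<bar>f x - f y\<bar> > t + n" "walk E n x y"
  shows "VS E f x y > t"
proof -
  have "dist_G E x y \<le> enat n" using dist_le[OF assms(2)] .
  then obtain d where d: "dist_G E x y = enat d" "d \<le> n"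
    by (cases "dist_G E x y") auto
  then show ?thesis using assms(1) by (simp add: VS_def)
qed

lemma VS_gt_walk:
  assumes "VS E f x y > t" "t \<ge> 0"
  shows "\<exists>m. walk E m x y \<and> \<bar>f x - f y\<bar> > t + m"
proof (cases "dist_G E x y")
  case (enat d)
  then show ?thesis using assms dist_enat[OF enat] by (auto simp: VS_def)
next
  case infinity
  then show ?thesis using assms by (simp add: VS_def)
qed

theorem claim2p3:
  fixes V :: "'a set" and E :: "('a \<times> 'a) set" and g h :: "'a \<Rightarrow> real"
    and r v :: real and M :: "('a \<times> 'a) set"
  assumes "finite V" and "E \<subseteq> V \<times> V" and "sym E"
    and "\<forall>x\<in>V. 0 \<le> g x \<and> g x \<le> r"
    and "\<forall>x\<in>V. \<forall>y\<in>V. VS E g x y \<le> v"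
    and "maximal_matching (viol_graph V E (2 * v / 3) g) M"
    and "\<forall>(x, y)\<in>M. h x = g x + v / 3 \<and> h y = g y - v / 3"
    and "\<forall>z\<in>V. (\<forall>(x, y)\<in>M. z \<noteq> x \<and> z \<noteq> y) \<longrightarrow> h z = g z"
  shows "\<forall>x\<in>V. \<forall>y\<in>V. VS E h x y \<le> 2 * v / 3"
proof (intro ballI)
  fix x0 y0 assume x0: "x0 \<in> V" and y0: "y0 \<in> V"
  have v0: "v \<ge> 0" using assms(5) x0 VS_nonneg[of E g x0 x0] by fastforce
  have MB: "M \<subseteq> viol_graph V E (2 * v / 3) g"
    using assms(6) by (simp add: maximal_matching_def is_matching_def)
  have gb: "g y - g x \<le> v + n" if "x \<in> V" "y \<in> V" "walk E n x y" for x y n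
    using VS_walk_le[OF _ that(3), of g v] assms(5) that by fastforce
  have Me: "\<exists>m. walk E m a b \<and> g b - g a > 2*v/3 + m \<and> a \<in> V \<and> b \<in> V"
    if "(a,b) \<in> M" for a b
  proof -
    have ab: "a \<in> V" "b \<in> V" "VS E g a b > 2*v/3" "g a < g b"
      using MB that by (auto simp: viol_graph_def)
    from VS_gt_walk[OF ab(3)] v0 obtain m where "walk E m a b" "\<bar>g a - g b\<bar> > 2*v/3 + m"
      by auto
    then show ?thesis using ab by auto
  qed
  have role: "(\<exists>b m. h z = g z + v/3 \<and> b \<in> V \<and> walk E m z b \<and> g b - g z > 2*v/3 + m)
     \<or> (\<exists>a m. h z = g z - v/3 \<and> a \<in> V \<and> walk E m a z \<and> g z - g a > 2*v/3 + m)
     \<or> (h z = g z \<and> (\<forall>(p,q)\<in>M. z \<noteq> p \<and> z \<noteq> q))" if "z \<in> V" for z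
  proof (cases "\<exists>b. (z,b) \<in> M")
    case True
    then obtain b where b: "(z,b) \<in> M" by auto
    then have "h z = g z + v/3" using assms(7) by auto
    then show ?thesis using Me[OF b] by blast
  next
    case F1: False
    show ?thesis
    proof (cases "\<exists>a. (a,z) \<in> M")
      case True
      then obtain a where a: "(a,z) \<in> M" by auto
      then have "h z = g z - v/3" using assms(7) by auto
      then show ?thesis using Me[OF a] by blast
    next
      case False
      then have "\<forall>(p,q)\<in>M. z \<noteq> p \<and> z \<noteq> q" using F1 by auto
      then show ?thesis using assms(8) that by auto
    qed
  qed
  have NN: "g y - g x \<le> 2*v/3 + n" if "x \<in> V" "y \<in> V" "walk E n x y"
    "\<forall>(p,q)\<in>M. x \<noteq> p \<and> x \<noteq> q" "\<forall>(p,q)\<in>M. y \<noteq> p \<and> y \<noteq> q" for x y n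
  proof (rule ccontr)
    assume "\<not> ?thesis"
    then have gt: "g y - g x > 2*v/3 + n" by simp
    then have "VS E g x y > 2*v/3" using VS_walk_gt[OF _ that(3), of "2*v/3" g] by simp
    moreover have "g x < g y" using gt v0 by linarith
    ultimately have xyB: "(x,y) \<in> viol_graph V E (2 * v / 3) g"
      using that by (simp add: viol_graph_def)
    have xy: "x \<noteq> y" using \<open>g x < g y\<close> by auto
    have nin: "(x,y) \<notin> M" using that(4) by auto
    have "is_matching (viol_graph V E (2 * v / 3) g) (insert (x,y) M)"
      unfolding is_matching_def
    proof (intro conjI ballI impI)
      show "insert (x, y) M \<subseteq> viol_graph V E (2 * v / 3) g" using MB xyB by blast
    next
      fix e1 e2 assume e: "e1 \<in> insert (x,y) M" "e2 \<in> insert (x,y) M" "e1 \<noteq> e2"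
      have old: "\<forall>e1\<in>M. \<forall>e2\<in>M. e1 \<noteq> e2 \<longrightarrow> {fst e1, snd e1} \<inter> {fst e2, snd e2} = {}"
        using assms(6) unfolding maximal_matching_def is_matching_def by blast
      have dis: "{x, y} \<inter> {fst e, snd e} = {}" if "e \<in> M" for e
        using that(1) \<open>\<forall>(p,q)\<in>M. x \<noteq> p \<and> x \<noteq> q\<close> \<open>\<forall>(p,q)\<in>M. y \<noteq> p \<and> y \<noteq> q\<close>
        by (cases e) auto
      show "{fst e1, snd e1} \<inter> {fst e2, snd e2} = {}"
        using e old dis[of e1] dis[of e2] by auto
    qed
    moreover have "M \<subset> insert (x,y) M" using nin by auto
    ultimately show False using assms(6) unfolding maximal_matching_def by blast
  qed
  have K: "h y - h x \<le> 2*v/3 + n" if "x \<in> V" "y \<in> V" "walk E n x y" for x y n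
  proof -
    have base: "g y - g x \<le> v + n" using gb that by blast
    from role[OF that(1)] role[OF that(2)] show ?thesis
    proof (elim disjE exE conjE)
      fix bx mx cy my
      assume "h x = g x + v/3" "bx \<in> V" "walk E mx x bx" "g bx - g x > 2*v/3 + mx"
        "h y = g y + v/3" "cy \<in> V" "walk E my y cy" "g cy - g y > 2*v/3 + my"
      moreover have "g cy - g x \<le> v + (n + my)" using gb[OF that(1) \<open>cy\<in>V\<close> walk_app[OF that(3) \<open>walk E my y cy\<close>]] by simp
      ultimately show ?thesis using v0 by simp
    next
      fix bx mx ay my
      assume "h x = g x + v/3" "h y = g y - v/3"
      then show ?thesis using base v0 by simp
    next
      fix bx mx
      assume "h x = g x + v/3" "h y = g y"
      then show ?thesis using base v0 by simp
    next
      fix ax mx cy my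
      assume "h x = g x - v/3" "ax \<in> V" "walk E mx ax x" "g x - g ax > 2*v/3 + mx"
        "h y = g y + v/3" "cy \<in> V" "walk E my y cy" "g cy - g y > 2*v/3 + my"
      moreover have "g cy - g ax \<le> v + (mx + n + my)"
        using gb[OF \<open>ax\<in>V\<close> \<open>cy\<in>V\<close> walk_app[OF walk_app[OF \<open>walk E mx ax x\<close> that(3)] \<open>walk E my y cy\<close>]] by simp
      ultimately show ?thesis using v0 by simp
    next
      fix ax mx ay my
      assume "h x = g x - v/3" "ax \<in> V" "walk E mx ax x" "g x - g ax > 2*v/3 + mx"
        "h y = g y - v/3"
      moreover have "g y - g ax \<le> v + (mx + n)"
        using gb[OF \<open>ax\<in>V\<close> that(2) walk_app[OF \<open>walk E mx ax x\<close> that(3)]] by simp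
      ultimately show ?thesis using v0 by simp
    next
      fix ax mx
      assume "h x = g x - v/3" "ax \<in> V" "walk E mx ax x" "g x - g ax > 2*v/3 + mx"
        "h y = g y"
      moreover have "g y - g ax \<le> v + (mx + n)"
        using gb[OF \<open>ax\<in>V\<close> that(2) walk_app[OF \<open>walk E mx ax x\<close> that(3)]] by simp
      ultimately show ?thesis using v0 by simp
    next
      fix cy my
      assume "h x = g x"
        "h y = g y + v/3" "cy \<in> V" "walk E my y cy" "g cy - g y > 2*v/3 + my"
      moreover have "g cy - g x \<le> v + (n + my)" using gb[OF that(1) \<open>cy\<in>V\<close> walk_app[OF that(3) \<open>walk E my y cy\<close>]] by simp
      ultimately show ?thesis using v0 by simp
    next
      fix ay my
      assume "h x = g x" "h y = g y - v/3"
      then show ?thesis using base v0 by simp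
    next
      assume "h x = g x" "\<forall>(p,q)\<in>M. x \<noteq> p \<and> x \<noteq> q" "h y = g y" "\<forall>(p,q)\<in>M. y \<noteq> p \<and> y \<noteq> q"
      then show ?thesis using NN[OF that] by simp
    qed
  qed
  show "VS E h x0 y0 \<le> 2 * v / 3"
  proof (cases "dist_G E x0 y0")
    case (enat d)
    have w: "walk E d x0 y0" using dist_enat[OF enat] .
    have w': "walk E d y0 x0" using walk_rev[OF assms(3) w] .
    have "h y0 - h x0 \<le> 2*v/3 + d" using K[OF x0 y0 w] .
    moreover have "h x0 - h y0 \<le> 2*v/3 + d" using K[OF y0 x0 w'] .
    ultimately show ?thesis using enat v0 by (simp add: VS_def abs_if max_def)
  next
    case infinity
    then show ?thesis using v0 by (simp add: VS_def)
  qed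
qed

end
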